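(* Let $n\geq 1$ and let $\mathrm{Aut}^0_{\mathrm{hol}}(\mathbb C^n)$ be the set of biholomorphic maps $F:\mathbb C^n\to\mathbb C^n$ with $F(0)=0$ and $DF(0)=I$. The map $\mathfrak{X}^n_0:\mathrm{Aut}^0_{\mathrm{hol}}(\mathbb C^n)\to\mathfrak{L}^n(PSH)$, $\mathfrak{X}^n_0(F)=L(\log\|F\|)$ (the Levi matrix of $z\mapsto\log\|F(z)\|$ on $\mathbb C^n\setminus\{0\}$), is injective. Equivalently, if $F,G\in \mathrm{Aut}^0_{\mathrm{hol}}(\mathbb C^n)$ and $\log\|F\|-\log\|G\|$ is pluriharmonic on $\mathbb C^n\setminus\{0\}$, then $F=G$.
   Context: $\|\cdot\|$ is the standard Hermitian norm on $\mathbb C^n$. For a real-valued $C^2$ function $g$ on an open subset of $\mathbb C^n$, its Levi matrix is $L(g)=\big(\partial^2 g/\partial z_i\partial\bar z_j\big)_{i,j}$; $g$ is plurisubharmonic if $L(g)\ge0$ and pluriharmonic if $L(g)=0$ everywhere. $\mathfrak{L}^n(PSH)$ denotes the set of Levi matrices of real-analytic plurisubharmonic functions on $\mathbb C^n\setminus\{0\}$. *)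

theory Defs
  imports "HOL-Analysis.Analysis"
begin

definition holo_on :: "(complex ^ 'n \<Rightarrow> complex ^ 'm) \<Rightarrow> (complex ^ 'n) set \<Rightarrow> bool" where
  "holo_on F S \<longleftrightarrow> open S \<and> (\<forall>z\<in>S. \<exists>L. (F has_derivative L) (at z) \<and>
       (\<forall>c v. L (c *s v) = c *s L v))"

definition biholomorphic :: "(complex ^ 'n \<Rightarrow> complex ^ 'n) \<Rightarrow> bool" where
  "biholomorphic F \<longleftrightarrow> bij F \<and> holo_on F UNIV \<and> holo_on (inv F) UNIV"

definition Aut0_hol :: "(complex ^ 'n \<Rightarrow> complex ^ 'n) set" where
  "Aut0_hol = {F. biholomorphic F \<and> F 0 = 0 \<and> (F has_derivative id) (at 0)}"

definition dirderiv :: "complex ^ 'n \<Rightarrow> (complex ^ 'n \<Rightarrow> real) \<Rightarrow> complex ^ 'n \<Rightarrow> real" where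
  "dirderiv v g z = deriv (\<lambda>t::real. g (z + t *\<^sub>R v)) 0"

text \<open>Levi matrix entry  d^2 g / dz_i d(conj z_j), written via real partial derivatives
  with z_k = x_k + i y_k:  (1/4)(g_{x_i x_j} + g_{y_i y_j} + i (g_{x_i y_j} - g_{y_i x_j})).\<close>
definition levi :: "(complex ^ 'n \<Rightarrow> real) \<Rightarrow> complex ^ 'n \<Rightarrow> complex ^ 'n ^ 'n" where
  "levi g z = (\<chi> i j.
     let ex = (\<lambda>k. axis k (1::complex)); ey = (\<lambda>k. axis k \<i>) in
     (1/4) * (complex_of_real (dirderiv (ex i) (dirderiv (ex j) g) z
                             + dirderiv (ey i) (dirderiv (ey j) g) z)
              + \<i> * complex_of_real (dirderiv (ex i) (dirderiv (ey j) g) z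
                             - dirderiv (ey i) (dirderiv (ex j) g) z)))"

definition X0 :: "(complex ^ 'n \<Rightarrow> complex ^ 'n) \<Rightarrow> complex ^ 'n \<Rightarrow> complex ^ 'n ^ 'n" where
  "X0 F = (\<lambda>z. if z = 0 then 0 else levi (\<lambda>w. ln (norm (F w))) z)"

end

theory Submission
  imports Defs "HOL-Complex_Analysis.Complex_Analysis"
begin

lemma param_contour_cont:
  fixes f :: "complex \<Rightarrow> complex \<Rightarrow> complex"
  assumes cont: "continuous_on (UNIV \<times> path_image \<gamma>) (\<lambda>(s,u). f s u)"
    and vp: "valid_path \<gamma>"
    and B: "\<And>t. t \<in> {0..1} \<Longrightarrow> norm (vector_derivative \<gamma> (at t)) \<le> B"
    and int: "\<And>s. f s contour_integrable_on \<gamma>"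
  shows "continuous_on UNIV (\<lambda>s. contour_integral \<gamma> (f s))"
proof -
  have cpi: "compact (path_image \<gamma>)"
    using vp by (simp add: compact_valid_path_image)
  show ?thesis unfolding continuous_on_def
  proof (intro ballI)
    fix s0 :: complex
    have K: "compact (cball s0 1 \<times> path_image \<gamma>)"
      using cpi by (simp add: compact_Times)
    have uc: "uniformly_continuous_on (cball s0 1 \<times> path_image \<gamma>) (\<lambda>(s,u). f s u)"
      by (rule compact_uniformly_continuous[OF continuous_on_subset[OF cont] K]) auto
    have ul: "uniform_limit (path_image \<gamma>) f (f s0) (at s0)"
      unfolding uniform_limit_iff
    proof (intro allI impI)
      fix e :: real assume "e > 0"
      then obtain d where d: "d > 0" and dd: "\<And>x x'. x \<in> cball s0 1 \<times> path_image \<gamma> \<Longrightarrow>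
           x' \<in> cball s0 1 \<times> path_image \<gamma> \<Longrightarrow> dist x' x < d \<Longrightarrow>
           dist ((\<lambda>(s,u). f s u) x') ((\<lambda>(s,u). f s u) x) < e"
        using uc unfolding uniformly_continuous_on_def by metis
      show "\<forall>\<^sub>F s in at s0. \<forall>u\<in>path_image \<gamma>. dist (f s u) (f s0 u) < e"
        unfolding eventually_at
      proof (intro exI[of _ "min d 1"] conjI allI impI ballI)
        show "min d 1 > 0" using d by simp
        fix s u assume s: "s \<noteq> s0 \<and> dist s s0 < min d 1" and u: "u \<in> path_image \<gamma>"
        have "dist (s,u) (s0,u) < d" using s by (simp add: dist_Pair_Pair)
        moreover have "(s,u) \<in> cball s0 1 \<times> path_image \<gamma>" "(s0,u) \<in> cball s0 1 \<times> path_image \<gamma>"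
          using s u by (auto simp: dist_commute)
        ultimately show "dist (f s u) (f s0 u) < e"
          using dd[of "(s0,u)" "(s,u)"] by auto
      qed
    qed
    have "((\<lambda>s. contour_integral \<gamma> (f s)) \<longlongrightarrow> contour_integral \<gamma> (f s0)) (at s0)"
      by (rule contour_integral_uniform_limit(2)[OF _ ul B vp]) (auto simp: int)
    then show "((\<lambda>s. contour_integral \<gamma> (f s)) \<longlongrightarrow> contour_integral \<gamma> (f s0)) (at s0 within UNIV)"
      by simp
  qed
qed

lemma param_contour_cont_compact:
  fixes f :: "complex \<Rightarrow> complex \<Rightarrow> complex"
  assumes S: "compact S"
    and cont: "continuous_on (S \<times> path_image \<gamma>) (\<lambda>(s,u). f s u)"
    and vp: "valid_path \<gamma>"
    and B: "\<And>t. t \<in> {0..1} \<Longrightarrow> norm (vector_derivative \<gamma> (at t)) \<le> B"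
    and int: "\<And>s. s \<in> S \<Longrightarrow> f s contour_integrable_on \<gamma>"
  shows "continuous_on S (\<lambda>s. contour_integral \<gamma> (f s))"
proof -
  have cpi: "compact (path_image \<gamma>)"
    using vp by (simp add: compact_valid_path_image)
  show ?thesis unfolding continuous_on_def
  proof (intro ballI)
    fix s0 :: complex assume s0: "s0 \<in> S"
    have K: "compact (S \<times> path_image \<gamma>)"
      using cpi S by (simp add: compact_Times)
    have uc: "uniformly_continuous_on (S \<times> path_image \<gamma>) (\<lambda>(s,u). f s u)"
      by (rule compact_uniformly_continuous[OF cont K])
    show "((\<lambda>s. contour_integral \<gamma> (f s)) \<longlongrightarrow> contour_integral \<gamma> (f s0)) (at s0 within S)"
    proof (cases "trivial_limit (at s0 within S)")
      case True then show ?thesis by (simp add: tendsto_def trivial_limit_eq)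
    next
      case False
    have ul: "uniform_limit (path_image \<gamma>) f (f s0) (at s0 within S)"
      unfolding uniform_limit_iff
    proof (intro allI impI)
      fix e :: real assume "e > 0"
      then obtain d where d: "d > 0" and dd: "\<And>x x'. x \<in> S \<times> path_image \<gamma> \<Longrightarrow>
           x' \<in> S \<times> path_image \<gamma> \<Longrightarrow> dist x' x < d \<Longrightarrow>
           dist ((\<lambda>(s,u). f s u) x') ((\<lambda>(s,u). f s u) x) < e"
        using uc unfolding uniformly_continuous_on_def by metis
      show "\<forall>\<^sub>F s in at s0 within S. \<forall>u\<in>path_image \<gamma>. dist (f s u) (f s0 u) < e"
        unfolding eventually_at
      proof (intro exI[of _ "d"] conjI allI impI ballI)
        show "d > 0" using d by simp
        fix s u assume s: "s \<in> S" "s \<noteq> s0 \<and> dist s s0 < d" and u: "u \<in> path_image \<gamma>"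
        have "dist (s,u) (s0,u) < d" using s by (simp add: dist_Pair_Pair)
        moreover have "(s,u) \<in> S \<times> path_image \<gamma>" "(s0,u) \<in> S \<times> path_image \<gamma>"
          using s s0 u by auto
        ultimately show "dist (f s u) (f s0 u) < e"
          using dd[of "(s0,u)" "(s,u)"] by auto
      qed
    qed
    show ?thesis
      by (rule contour_integral_uniform_limit(2)[OF _ ul B vp False])
         (auto simp: int eventually_at_filter)
    qed
  qed
qed

lemma sep_holo_deriv:
  fixes \<Phi> :: "complex \<Rightarrow> complex \<Rightarrow> complex"
  assumes cont: "continuous_on UNIV (\<lambda>(s,t). \<Phi> s t)"
    and h1: "\<And>t. (\<lambda>s. \<Phi> s t) holomorphic_on UNIV"
    and h2: "\<And>s. (\<lambda>t. \<Phi> s t) holomorphic_on UNIV"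
  shows "(\<lambda>s. deriv (\<lambda>t. \<Phi> s t) 0) holomorphic_on UNIV"
proof -
  define f where "f = (\<lambda>s u. \<Phi> s u / u^2)"
  let ?C = "circlepath (0::complex) 1"
  have pic: "path_image ?C = sphere 0 1" by simp
  have contf: "continuous_on (UNIV \<times> sphere 0 1) (\<lambda>(s,u). f s u)"
  proof -
    have c1: "continuous_on (UNIV \<times> sphere 0 1) (\<lambda>p. \<Phi> (fst p) (snd p))"
      using continuous_on_subset[OF cont] by (simp add: case_prod_unfold)
    have c2: "continuous_on (UNIV \<times> sphere 0 1) (\<lambda>p::complex\<times>complex. (snd p)^2)"
      by (intro continuous_intros)
    have "continuous_on (UNIV \<times> sphere 0 1) (\<lambda>p. \<Phi> (fst p) (snd p) / (snd p)^2)"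
      by (rule continuous_on_divide[OF c1 c2]) auto
    then show ?thesis by (simp add: f_def case_prod_unfold)
  qed
  have contfs: "continuous_on (sphere 0 1) (f s)" for s
    by (rule continuous_on_compose2[OF contf, of _ "\<lambda>u. (s,u)", simplified]) (auto intro: continuous_intros)
  have cauchy: "(f s has_contour_integral (2 * pi * \<i> * deriv (\<lambda>t. \<Phi> s t) 0)) ?C" for s
  proof -
    have "((\<lambda>u. \<Phi> s u / (u-0) ^ (Suc 1)) has_contour_integral ((2 * pi * \<i>) / (fact 1) * (deriv ^^ 1) (\<lambda>t. \<Phi> s t) 0)) ?C"
      by (rule Cauchy_has_contour_integral_higher_derivative_circlepath)
         (auto intro: holomorphic_on_imp_continuous_on holomorphic_on_subset[OF h2])
    then show ?thesis by (simp add: f_def power2_eq_square)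
  qed
  define I where "I = (\<lambda>s. contour_integral ?C (f s))"
  have Ieq: "deriv (\<lambda>t. \<Phi> s t) 0 = I s / (2 * pi * \<i>)" for s
    using contour_integral_unique[OF cauchy[of s]] by (simp add: I_def)
  have contI: "continuous_on UNIV I"
    unfolding I_def
    by (rule param_contour_cont[where B = "2*pi"])
       (auto simp: contf contfs vector_derivative_circlepath norm_mult intro!: contour_integrable_continuous_circlepath)
  have "I analytic_on UNIV"
  proof (rule Morera_triangle[OF contI open_UNIV], intro impI)
    fix a b c :: complex
    have swap: "contour_integral (linepath p q) I = contour_integral ?C (\<lambda>u. contour_integral (linepath p q) (\<lambda>s. f s u))" for p q
      unfolding I_def
      by (rule contour_integral_swap)
         (auto simp: vector_derivative_circlepath intro!: continuous_intros continuous_on_subset[OF contf])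
    have lint: "(\<lambda>u. contour_integral (linepath p q) (\<lambda>s. f s u)) contour_integrable_on ?C" for p q
    proof -
      have "continuous_on (sphere 0 1) (\<lambda>u. contour_integral (linepath p q) (\<lambda>s. f s u))"
      proof (rule param_contour_cont_compact[where B="norm (q - p)"])
        have "continuous_on (sphere 0 1 \<times> closed_segment p q) ((\<lambda>(s,u). f s u) \<circ> (\<lambda>(u,s). (s,u)))"
          by (rule continuous_on_compose[OF _ continuous_on_subset[OF contf]]) (auto intro!: continuous_intros simp: case_prod_unfold)
        then show "continuous_on (sphere 0 1 \<times> path_image (linepath p q)) (\<lambda>(u,s). f s u)"
          by (simp add: o_def case_prod_unfold)
        show "(\<lambda>s. f s u) contour_integrable_on linepath p q" if "u \<in> sphere 0 1" for u
          using that
          by (intro contour_integrable_continuous_linepath continuous_on_compose2[OF contf, of _ "\<lambda>s. (s,u)", simplified])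
             (auto intro: continuous_intros)
      qed auto
      then show ?thesis by (intro contour_integrable_continuous_circlepath) simp
    qed
    have zero: "contour_integral (linepath a b) (\<lambda>s. f s u) + contour_integral (linepath b c) (\<lambda>s. f s u)
          + contour_integral (linepath c a) (\<lambda>s. f s u) = 0" for u
      by (rule has_chain_integral_chain_integral3[OF Cauchy_theorem_triangle])
         (auto simp: f_def intro!: holomorphic_intros holomorphic_on_subset[OF h1])
    show "contour_integral (linepath a b) I + contour_integral (linepath b c) I + contour_integral (linepath c a) I = 0"
      unfolding swap
      by (subst contour_integral_add[symmetric], (intro lint contour_integrable_add)+)+ (simp add: zero)
  qed
  then have "I holomorphic_on UNIV" by (simp add: analytic_imp_holomorphic)
  then show ?thesis unfolding Ieq by (intro holomorphic_intros) auto
qed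


lemma inj_entire_poly:
  fixes f :: "complex \<Rightarrow> complex"
  assumes holf: "f holomorphic_on UNIV" and inj: "inj f"
  obtains a n where "\<And>z. f z = (\<Sum>i\<le>n. a i * z^i)"
proof -
  have nc: "\<not> f constant_on UNIV"
  proof
    assume "f constant_on UNIV"
    then have "f 0 = f 1" by (auto simp: constant_on_def)
    with inj show False by (auto dest: injD)
  qed
  have opn: "open (f ` ball 0 1)"
    by (rule open_mapping_thm[OF holf open_UNIV connected_UNIV open_ball _ nc]) auto
  define h where "h = f \<circ> inverse"
  have holh: "h holomorphic_on (ball 0 1 - {0})"
    unfolding h_def by (intro holomorphic_on_compose holomorphic_intros holomorphic_on_subset[OF holf]) auto
  have "(\<exists>l. (h \<longlongrightarrow> l) (at 0)) \<or> (\<exists>l. ((inverse \<circ> h) \<longlongrightarrow> l) (at 0))"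
  proof (rule ccontr)
    assume "\<not> ?thesis"
    then have "closure (h ` (ball 0 1 - {0})) = UNIV"
      by (intro Casorati_Weierstrass[OF open_ball _ holh]) auto
    moreover have "f 0 \<in> f ` ball 0 1" by simp
    then obtain e where e: "e > 0" "ball (f 0) e \<subseteq> f ` ball 0 1"
      using opn by (meson openE)
    ultimately have "f 0 \<in> closure (h ` (ball 0 1 - {0}))" by simp
    then obtain y where y: "y \<in> h ` (ball 0 1 - {0})" "dist y (f 0) < e"
      using closure_approachable e by blast
    then obtain w where w: "w \<in> ball 0 1 - {0}" "y = h w" by blast
    then have w: "w \<in> ball 0 1 - {0}" "y = f (inverse w)" by (auto simp: h_def)
    have "y \<in> ball (f 0) e" using y(2) by (simp add: dist_commute)
    then have "y \<in> f ` ball 0 1" using e by blast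
    then obtain v where v: "v \<in> ball 0 1" "y = f v" by blast
    have "inverse w = v" using inj w v by (auto dest: injD)
    moreover have "norm (inverse w) > 1"
    proof -
      have "norm w < 1" "norm w > 0" using w by auto
      then show ?thesis by (simp add: norm_inverse one_less_inverse)
    qed
    ultimately show False using v by simp
  qed
  then show thesis
  proof
    assume "\<exists>l. (h \<longlongrightarrow> l) (at 0)"
    then obtain l where "(f \<longlongrightarrow> l) at_infinity" by (auto simp: h_def lim_at_infinity_0)
    then have "f z = l" for z using Liouville_weak[OF holf] by blast
    then have False using nc by (auto simp: constant_on_def)
    then show thesis ..
  next
    assume "\<exists>l. ((inverse \<circ> h) \<longlongrightarrow> l) (at 0)"
    then obtain l where "((inverse \<circ> f) \<longlongrightarrow> l) at_infinity"
      by (auto simp: h_def lim_at_infinity_0 o_assoc)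
    from pole_at_infinity[OF holf this] that show thesis by blast
  qed
qed

lemma inj_entire_id:
  fixes f :: "complex \<Rightarrow> complex"
  assumes holf: "f holomorphic_on UNIV" and inj: "inj f" and f0: "f 0 = 0"
    and d0: "(f has_field_derivative 1) (at 0)"
  shows "f z = z"
proof -
  obtain a n where fa: "\<And>z. f z = (\<Sum>i\<le>n. a i * z^i)"
    using inj_entire_poly[OF holf inj] by blast
  obtain b where fb: "\<And>z. (\<Sum>i\<le>n. a i * z^i) = (z - 1) * (\<Sum>i<n. b i * z^i) + (\<Sum>i\<le>n. a i * 1^i)"
    using polyfun_linear_factor[of a n 1] by blast
  define r where "r = (\<lambda>z. \<Sum>i<n. b i * z^i)"
  define c where "c = f 1"
  have fr: "f z = (z - 1) * r z + c" for z
    using fb[of z] fb[of 1] fa[of z] fa[of 1] by (simp add: r_def c_def)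
  have dr: "(f has_field_derivative ((z - 1) * deriv r z + r z)) (at z)" for z
  proof -
    have "r holomorphic_on UNIV" unfolding r_def by (intro holomorphic_intros)
    then have rd: "(r has_field_derivative deriv r z) (at z)"
      by (rule holomorphic_derivI) auto
    have d1: "((\<lambda>z. z - 1) has_field_derivative 1) (at z)" by (auto intro!: derivative_eq_intros)
    have "((\<lambda>z. (z - 1) * r z + c) has_field_derivative (1 * r z + deriv r z * (z - 1) + 0)) (at z)"
      by (rule DERIV_add[OF DERIV_mult[OF d1 rd] DERIV_const])
    then show ?thesis unfolding fr[abs_def] by (simp add: algebra_simps)
  qed
  have reg: "deriv f z \<noteq> 0" for z
    by (rule holomorphic_injective_imp_regular[OF holf open_UNIV]) (use inj in auto)
  have r1: "r 1 \<noteq> 0"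
    using reg[of 1] DERIV_imp_deriv[OF dr[of 1]] by simp
  have rroot: "r \<xi> \<noteq> 0" for \<xi>
  proof
    assume "r \<xi> = 0"
    then have "f \<xi> = f 1" using fr[of \<xi>] fr[of 1] by simp
    then have "\<xi> = 1" using inj by (auto dest: injD)
    with r1 \<open>r \<xi> = 0\<close> show False by simp
  qed
  have rconst: "r z = b 0" for z
  proof (cases n)
    case 0 then show ?thesis using rroot[of 0] by (simp add: r_def)
  next
    case (Suc m)
    have rm: "r z = (\<Sum>i\<le>m. b i * z^i)" for z by (simp add: r_def Suc lessThan_Suc_atMost)
    have "\<not> (b 0 = 0 \<or> (\<exists>i\<in>{1..m}. b i \<noteq> 0))"
    proof
      assume "b 0 = 0 \<or> (\<exists>i\<in>{1..m}. b i \<noteq> 0)"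
      then obtain \<xi> where "(\<Sum>i\<le>m. b i * \<xi>^i) = 0" by (rule fundamental_theorem_of_algebra)
      then show False using rroot[of \<xi>] rm by simp
    qed
    then have "\<forall>i. i \<noteq> 0 \<and> i \<le> m \<longrightarrow> b i = 0" by auto
    then have "\<forall>z. (\<Sum>i\<le>m. b i * z^i) = b 0"
      using polyfun_eq_const[of b m "b 0"] by auto
    then show ?thesis using rm by simp
  qed
  have "deriv r z = 0" for z
  proof -
    have "r = (\<lambda>_. b 0)" using rconst by auto
    then show ?thesis by simp
  qed
  then have "(f has_field_derivative b 0) (at 0)" using dr[of 0] rconst[of 0] by simp
  then have b1: "b 0 = 1" using d0 DERIV_unique by blast
  have "c = 1" using f0 fr[of 0] rconst[of 0] b1 by simp
  then show ?thesis using fr[of z] rconst[of z] b1 by simp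
qed


definition Dh :: "(complex ^ 'n \<Rightarrow> complex ^ 'm) \<Rightarrow> complex ^ 'n \<Rightarrow> complex ^ 'n \<Rightarrow> complex ^ 'm" where
  "Dh F w = (SOME L. (F has_derivative L) (at w) \<and> (\<forall>c v. L (c *s v) = c *s L v))"

lemma norm_smult_vec: "norm (c *s (x::complex^'n)) = norm c * norm x"
  unfolding norm_vec_def by (simp add: L2_set_right_distrib norm_mult)

lemma scaleR_cplx: "r *\<^sub>R (z::complex) = complex_of_real r * z"
  by (simp add: scaleR_conv_of_real)

lemma scaleR_smult_vec: "r *\<^sub>R (c *s (x::complex^'n)) = (of_real r * c) *s x"
  by (simp add: vec_eq_iff scaleR_cplx)

lemma scaleR_vec_smult: "r *\<^sub>R (x::complex^'n) = (of_real r) *s x"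
  by (simp add: vec_eq_iff scaleR_cplx)

lemma Dh:
  assumes "holo_on F UNIV"
  shows "(F has_derivative Dh F w) (at w)" "Dh F w (c *s v) = c *s Dh F w v"
proof -
  have "\<exists>L. (F has_derivative L) (at w) \<and> (\<forall>c v. L (c *s v) = c *s L v)"
    using assms unfolding holo_on_def by blast
  from someI_ex[OF this] show "(F has_derivative Dh F w) (at w)" "Dh F w (c *s v) = c *s Dh F w v"
    unfolding Dh_def by blast+
qed

lemma Dh_unique:
  assumes "holo_on F UNIV" "(F has_derivative L) (at w)"
  shows "Dh F w = L"
  using has_derivative_unique[OF Dh(1)[OF assms(1)] assms(2)] .

lemma Dh_linear:
  assumes "holo_on F UNIV"
  shows "linear (Dh F w)"
  using has_derivative_linear[OF Dh(1)[OF assms]] .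

lemma vec_expand: "x = (\<Sum>j\<in>UNIV. (x $ j) *s axis j (1::complex))"
  by (simp add: vec_eq_iff sum_component axis_def if_distrib sum.delta cong: if_cong
)

lemma Dh_expand:
  assumes "holo_on F UNIV"
  shows "Dh F w x = (\<Sum>j\<in>UNIV. (x $ j) *s Dh F w (axis j 1))"
proof -
  have "Dh F w x = Dh F w (\<Sum>j\<in>UNIV. (x $ j) *s axis j (1::complex))"
    using vec_expand[of x] by simp
  also have "\<dots> = (\<Sum>j\<in>UNIV. Dh F w ((x $ j) *s axis j 1))"
    by (rule linear_sum[OF Dh_linear[OF assms]])
  also have "\<dots> = (\<Sum>j\<in>UNIV. (x $ j) *s Dh F w (axis j 1))"
    by (simp add: Dh(2)[OF assms])
  finally show ?thesis .
qed

lemma holo_cont: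
  assumes "holo_on F UNIV"
  shows "continuous_on UNIV F"
  using Dh(1)[OF assms] has_derivative_continuous continuous_at_imp_continuous_on by blast

lemma line_has_derivative:
  assumes "holo_on F UNIV"
  shows "((\<lambda>t::complex. F (w + t *s e)) has_derivative (\<lambda>h. h *s Dh F (w + t *s e) e)) (at t)"
proof -
  have l: "((\<lambda>t::complex. w + t *s e) has_derivative (\<lambda>h. h *s e)) (at t)"
  proof -
    have "bounded_linear (\<lambda>h::complex. h *s e)"
      by (rule bounded_linear_intro[of _ "norm e"])
         (auto simp: vector_sadd_rdistrib vector_add_ldistrib vector_smult_assoc norm_smult_vec scaleR_smult_vec scaleR_cplx)
      then show ?thesis
      by (auto intro!: derivative_eq_intros bounded_linear_imp_has_derivative)
  qed
  show ?thesis
    using has_derivative_compose[OF l Dh(1)[OF assms]] by (simp add: o_def Dh(2)[OF assms])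
qed

lemma line_field_deriv:
  fixes F :: "complex^'n \<Rightarrow> complex^'m"
  assumes "holo_on F UNIV"
  shows "((\<lambda>t::complex. F (w + t *s e) $ k) has_field_derivative (Dh F (w + t *s e) e $ k)) (at t)"
proof -
  have "((\<lambda>t::complex. F (w + t *s e) $ k) has_derivative (\<lambda>h. (h *s Dh F (w + t *s e) e) $ k)) (at t)"
    by (rule bounded_linear.has_derivative[OF bounded_linear_vec_nth line_has_derivative[OF assms]])
  moreover have "(\<lambda>h. h * c) = (*) c" for c :: complex by (rule ext) (simp add: mult.commute)
  ultimately show ?thesis
    by (simp add: has_field_derivative_def)
qed

lemma line_holo:
  fixes F :: "complex^'n \<Rightarrow> complex^'m"
  assumes "holo_on F UNIV"
  shows "(\<lambda>t::complex. F (w + t *s e) $ k) holomorphic_on UNIV"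
  using line_field_deriv[OF assms] unfolding holomorphic_on_def field_differentiable_def by blast

lemma Dh_holo:
  fixes F :: "complex^'n \<Rightarrow> complex^'m"
  assumes hF: "holo_on F UNIV"
  shows "(\<lambda>s. Dh F (z + s *s a) b $ k) holomorphic_on UNIV"
proof -
  define \<Phi> where "\<Phi> = (\<lambda>s t. F (z + s *s a + t *s b) $ k)"
  have "continuous_on UNIV (\<lambda>p::complex\<times>complex. F (z + fst p *s a + snd p *s b) $ k)"
  proof -
    have c1: "continuous_on UNIV (\<lambda>p::complex\<times>complex. z + fst p *s a + snd p *s b)"
    proof -
      have bl: "bounded_linear (\<lambda>h::complex. h *s x)" for x :: "complex^'n"
        by (rule bounded_linear_intro[of _ "norm x"])
           (auto simp: vector_sadd_rdistrib vector_add_ldistrib vector_smult_assoc norm_smult_vec scaleR_smult_vec scaleR_cplx)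
      have ca: "continuous_on UNIV (\<lambda>p::complex\<times>complex. fst p *s a)"
        by (rule bounded_linear.continuous_on[OF bl continuous_on_fst[OF continuous_on_id]])
      have cb: "continuous_on UNIV (\<lambda>p::complex\<times>complex. snd p *s b)"
        by (rule bounded_linear.continuous_on[OF bl continuous_on_snd[OF continuous_on_id]])
      show ?thesis
        by (intro continuous_on_add continuous_on_const ca cb)
    qed
    show ?thesis
      by (rule continuous_on_compose2[OF bounded_linear.continuous_on[OF bounded_linear_vec_nth holo_cont[OF hF]] c1]) auto
  qed
  then have cont: "continuous_on UNIV (\<lambda>(s,t). \<Phi> s t)"
    by (simp add: \<Phi>_def case_prod_unfold)
  have h1: "(\<lambda>s. \<Phi> s t) holomorphic_on UNIV" for t
    using line_holo[OF hF, of "z + t *s b" a k] by (simp add: \<Phi>_def add_ac)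
  have h2: "(\<lambda>t. \<Phi> s t) holomorphic_on UNIV" for s
    using line_holo[OF hF, of "z + s *s a" b k] by (simp add: \<Phi>_def add_ac)
  have "deriv (\<lambda>t. \<Phi> s t) 0 = Dh F (z + s *s a) b $ k" for s
    using DERIV_imp_deriv[OF line_field_deriv[OF hF, of "z + s *s a" b k 0]] by (simp add: \<Phi>_def)
  then show ?thesis
    using sep_holo_deriv[OF cont h1 h2] by simp
qed


lemma times_comm_fun: "(\<lambda>h. h * c) = (*) (c::'a::comm_semiring_1)"
  by (rule ext) (simp add: mult.commute)

lemma times_comm_fun2: "(\<lambda>h. h * a + h * b) = (*) (a + b::'a::comm_semiring_1)"
  by (rule ext) (simp add: algebra_simps)

lemma ln_norm_inner: "ln (norm x) = ln (inner x x) / 2"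
proof (cases "x = 0")
  case True then show ?thesis by simp
next
  case False
  then have "inner x x = (norm x)^2" by (simp add: power2_norm_eq_inner)
  then show ?thesis using False by (simp add: ln_realpow)
qed

lemma has_real_derivative_ln_norm:
  fixes \<phi> :: "real \<Rightarrow> 'a::real_inner"
  assumes d: "(\<phi> has_vector_derivative d) (at t0)" and nz: "\<phi> t0 \<noteq> 0"
  shows "((\<lambda>t. ln (norm (\<phi> t))) has_real_derivative (inner (\<phi> t0) d / inner (\<phi> t0) (\<phi> t0))) (at t0)"
proof -
  have pos: "inner (\<phi> t0) (\<phi> t0) > 0" using nz by simp
  have i: "((\<lambda>t. inner (\<phi> t) (\<phi> t)) has_real_derivative (2 * inner (\<phi> t0) d)) (at t0)"
  proof -
    have "((\<lambda>t. inner (\<phi> t) (\<phi> t)) has_derivative (\<lambda>h. inner (\<phi> t0) (h *\<^sub>R d) + inner (h *\<^sub>R d) (\<phi> t0))) (at t0)"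
      using d unfolding has_vector_derivative_def by (intro derivative_eq_intros) auto
    then show ?thesis
      by (simp add: has_field_derivative_def inner_commute algebra_simps times_comm_fun)
  qed
  have "((\<lambda>t. ln (inner (\<phi> t) (\<phi> t)) / 2) has_real_derivative (inverse (inner (\<phi> t0) (\<phi> t0)) * (2 * inner (\<phi> t0) d) / 2)) (at t0)"
    by (rule DERIV_cdivide[OF DERIV_chain2[OF DERIV_ln[OF pos] i]])
  then show ?thesis
    by (simp add: ln_norm_inner field_simps)
qed

lemma vec_has_vector_derivative:
  fixes f :: "real \<Rightarrow> 'a::real_normed_vector ^ 'n"
  assumes "\<And>k. ((\<lambda>t. f t $ k) has_vector_derivative (d $ k)) (at t0)"
  shows "(f has_vector_derivative d) (at t0)"
proof -
  have c: "((\<lambda>y. (1 / norm (y - t0)) *\<^sub>R (f y $ k - (f t0 $ k + (y - t0) *\<^sub>R d $ k))) \<longlongrightarrow> 0) (at t0)" for k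
    using assms[of k] unfolding has_vector_derivative_def has_derivative_within[where s=UNIV, simplified] by simp
  have "((\<lambda>y. (1 / norm (y - t0)) *\<^sub>R (f y - (f t0 + (y - t0) *\<^sub>R d))) \<longlongrightarrow> 0) (at t0)"
    by (rule vec_tendstoI) (use c in simp)
  then show ?thesis
    unfolding has_vector_derivative_def has_derivative_within[where s=UNIV, simplified]
    by (simp add: bounded_linear_scaleR_left)
qed

lemma path_vector_derivative:
  fixes F :: "complex^'n \<Rightarrow> complex^'m"
  assumes hF: "holo_on F UNIV"
  shows "((\<lambda>t::real. F (w + t *\<^sub>R v)) has_vector_derivative Dh F (w + t0 *\<^sub>R v) v) (at t0)"
proof -
  have l: "((\<lambda>t::real. w + t *\<^sub>R v) has_derivative (\<lambda>h. h *\<^sub>R v)) (at t0)"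
    by (auto intro!: derivative_eq_intros)
  have "((\<lambda>t::real. F (w + t *\<^sub>R v)) has_derivative (\<lambda>h. Dh F (w + t0 *\<^sub>R v) (h *\<^sub>R v))) (at t0)"
    using has_derivative_compose[OF l Dh(1)[OF hF]] by (simp add: o_def)
  then show ?thesis
    unfolding has_vector_derivative_def
    by (simp add: linear_scale[OF Dh_linear[OF hF]])
qed

lemma first_dir:
  fixes F :: "complex^'n \<Rightarrow> complex^'m"
  assumes hF: "holo_on F UNIV" and nz: "F w \<noteq> 0"
  shows "dirderiv v (\<lambda>w. ln (norm (F w))) w = inner (F w) (Dh F w v) / inner (F w) (F w)"
proof -
  have "((\<lambda>t. ln (norm (F (w + t *\<^sub>R v)))) has_real_derivative
          (inner (F (w + 0 *\<^sub>R v)) (Dh F (w + 0 *\<^sub>R v) v) / inner (F (w + 0 *\<^sub>R v)) (F (w + 0 *\<^sub>R v)))) (at 0)"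
    by (rule has_real_derivative_ln_norm[OF path_vector_derivative[OF hF]]) (use nz in simp)
  then show ?thesis unfolding dirderiv_def by (simp add: DERIV_imp_deriv)
qed

lemma eventually_nonzero_line:
  fixes z u :: "complex^'n"
  assumes "z \<noteq> 0"
  shows "eventually (\<lambda>t::real. z + t *\<^sub>R u \<noteq> 0) (nhds 0)"
proof -
  have "((\<lambda>t::real. z + t *\<^sub>R u) \<longlongrightarrow> z + 0 *\<^sub>R u) (nhds 0)"
    by (intro tendsto_intros) (simp add: tendsto_ident_at filterlim_ident)
  then have "((\<lambda>t::real. z + t *\<^sub>R u) \<longlongrightarrow> z) (nhds 0)" by simp
  moreover have "open (-{0::complex^'n})" by auto
  ultimately show ?thesis
    using assms by (auto dest: topological_tendstoD)
qed

lemma Dh_path_deriv: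
  fixes F :: "complex^'n \<Rightarrow> complex^'m" and z :: "complex^'n" and i j :: 'n and c1 c2 :: complex
  assumes hF: "holo_on F UNIV"
  defines "H \<equiv> (\<chi> k. deriv (\<lambda>\<sigma>. Dh F (z + \<sigma> *s axis i 1) (axis j 1) $ k) 0)"
  shows "((\<lambda>t::real. Dh F (z + t *\<^sub>R (c1 *s axis i 1)) (c2 *s axis j 1)) has_vector_derivative ((c1 * c2) *s H)) (at 0)"
proof (rule vec_has_vector_derivative)
  fix k
  define \<Psi> where "\<Psi> = (\<lambda>\<sigma>. Dh F (z + \<sigma> *s axis i 1) (axis j 1) $ k)"
  have hol: "\<Psi> holomorphic_on UNIV" unfolding \<Psi>_def by (rule Dh_holo[OF hF])
  have dP: "(\<Psi> has_field_derivative deriv \<Psi> x) (at x)" for x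
    by (rule holomorphic_derivI[OF hol]) auto
  have "((\<lambda>\<sigma>. c2 * \<Psi> (\<sigma> * c1)) has_field_derivative (c2 * (deriv \<Psi> (0 * c1) * c1))) (at 0)"
    by (intro DERIV_cmult DERIV_chain2[OF dP]) (auto intro!: derivative_eq_intros)
  then have "((\<lambda>t::real. c2 * \<Psi> (of_real t * c1)) has_vector_derivative (c2 * (deriv \<Psi> 0 * c1))) (at 0)"
    using has_vector_derivative_real_field[of "\<lambda>\<sigma>. c2 * \<Psi> (\<sigma> * c1)" _ 0] by simp
  moreover have "Dh F (z + t *\<^sub>R (c1 *s axis i 1)) (c2 *s axis j 1) $ k = c2 * \<Psi> (of_real t * c1)" for t
    by (simp add: \<Psi>_def Dh(2)[OF hF] scaleR_smult_vec)
  ultimately show "((\<lambda>t. Dh F (z + t *\<^sub>R (c1 *s axis i 1)) (c2 *s axis j 1) $ k) has_vector_derivative ((c1 * c2) *s H) $ k) (at 0)"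
    by (simp add: H_def \<Psi>_def algebra_simps)
qed

lemma second_dir:
  fixes F :: "complex^'n \<Rightarrow> complex^'m" and z :: "complex^'n" and i j :: 'n and c1 c2 :: complex
  assumes hF: "holo_on F UNIV" and nz: "\<And>w. w \<noteq> 0 \<Longrightarrow> F w \<noteq> 0" and z: "z \<noteq> 0"
  defines "H \<equiv> (\<chi> k. deriv (\<lambda>\<sigma>. Dh F (z + \<sigma> *s axis i 1) (axis j 1) $ k) 0)"
  defines "u \<equiv> c1 *s axis i 1" and "v \<equiv> c2 *s axis j 1"
  defines "N \<equiv> inner (F z) (F z)"
  shows "dirderiv u (dirderiv v (\<lambda>w. ln (norm (F w)))) z =
    (inner (Dh F z u) (Dh F z v) + inner (F z) ((c1 * c2) *s H)) / N
     - inner (F z) (Dh F z v) * (2 * inner (F z) (Dh F z u)) / N^2"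
proof -
  define \<phi> where "\<phi> = (\<lambda>t::real. F (z + t *\<^sub>R u))"
  define \<psi> where "\<psi> = (\<lambda>t::real. Dh F (z + t *\<^sub>R u) v)"
  have d\<phi>: "(\<phi> has_vector_derivative Dh F z u) (at 0)"
    using path_vector_derivative[OF hF, of z u 0] by (simp add: \<phi>_def)
  have d\<psi>: "(\<psi> has_vector_derivative ((c1 * c2) *s H)) (at 0)"
    unfolding \<psi>_def u_def v_def H_def by (rule Dh_path_deriv[OF hF])
  have N0: "N \<noteq> 0" using nz[OF z] by (simp add: N_def)
  have num: "((\<lambda>t. inner (\<phi> t) (\<psi> t)) has_real_derivative
      (inner (\<phi> 0) ((c1 * c2) *s H) + inner (Dh F z u) (\<psi> 0))) (at 0)"
  proof -
    have "((\<lambda>t. inner (\<phi> t) (\<psi> t)) has_derivative (\<lambda>h. inner (\<phi> 0) (h *\<^sub>R ((c1 * c2) *s H)) + inner (h *\<^sub>R Dh F z u) (\<psi> 0))) (at 0)"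
      using d\<phi> d\<psi> unfolding has_vector_derivative_def by (intro derivative_eq_intros) auto
    then show ?thesis
      by (simp add: has_field_derivative_def times_comm_fun2 inner_scaleR_right inner_scaleR_left add.commute)
  qed
  have den: "((\<lambda>t. inner (\<phi> t) (\<phi> t)) has_real_derivative (2 * inner (\<phi> 0) (Dh F z u))) (at 0)"
  proof -
    have "((\<lambda>t. inner (\<phi> t) (\<phi> t)) has_derivative (\<lambda>h. inner (\<phi> 0) (h *\<^sub>R Dh F z u) + inner (h *\<^sub>R Dh F z u) (\<phi> 0))) (at 0)"
      using d\<phi> unfolding has_vector_derivative_def by (intro derivative_eq_intros) auto
    then show ?thesis
      by (simp add: has_field_derivative_def inner_commute algebra_simps times_comm_fun)
  qed
  have \<phi>0: "\<phi> 0 = F z" and \<psi>0: "\<psi> 0 = Dh F z v" by (simp_all add: \<phi>_def \<psi>_def)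
  have quot: "((\<lambda>t. inner (\<phi> t) (\<psi> t) / inner (\<phi> t) (\<phi> t)) has_real_derivative
      ((inner (F z) ((c1 * c2) *s H) + inner (Dh F z u) (Dh F z v)) * N - inner (F z) (Dh F z v) * (2 * inner (F z) (Dh F z u))) / (N * N)) (at 0)"
    using DERIV_divide[OF num den] N0 by (simp add: \<phi>0 \<psi>0 N_def)
  have ev: "eventually (\<lambda>t. dirderiv v (\<lambda>w. ln (norm (F w))) (z + t *\<^sub>R u) = inner (\<phi> t) (\<psi> t) / inner (\<phi> t) (\<phi> t)) (nhds 0)"
    using eventually_nonzero_line[OF z, of u]
    by eventually_elim (simp add: first_dir[OF hF nz] \<phi>_def \<psi>_def)
  have "((\<lambda>t. dirderiv v (\<lambda>w. ln (norm (F w))) (z + t *\<^sub>R u)) has_real_derivative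
      ((inner (F z) ((c1 * c2) *s H) + inner (Dh F z u) (Dh F z v)) * N - inner (F z) (Dh F z v) * (2 * inner (F z) (Dh F z u))) / (N * N)) (at 0)"
    using quot DERIV_cong_ev[OF refl ev refl] by blast
  then have "dirderiv u (dirderiv v (\<lambda>w. ln (norm (F w)))) z =
      ((inner (F z) ((c1 * c2) *s H) + inner (Dh F z u) (Dh F z v)) * N - inner (F z) (Dh F z v) * (2 * inner (F z) (Dh F z u))) / (N * N)"
    unfolding dirderiv_def[of u] by (rule DERIV_imp_deriv)
  also have "\<dots> = (inner (Dh F z u) (Dh F z v) + inner (F z) ((c1 * c2) *s H)) / N
     - inner (F z) (Dh F z v) * (2 * inner (F z) (Dh F z u)) / N^2"
    using N0 by (simp add: field_simps power2_eq_square)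
  finally show ?thesis .
qed


definition cin :: "complex^'n \<Rightarrow> complex^'n \<Rightarrow> complex" where
  "cin x y = (\<Sum>k\<in>UNIV. x $ k * cnj (y $ k))"

lemma inner_cin: "inner x y = Re (cin x y)"
  by (simp add: cin_def inner_vec_def inner_complex_def Re_sum)

lemma cin_smult_left [simp]: "cin (c *s x) y = c * cin x y"
  by (simp add: cin_def sum_distrib_left mult.assoc)

lemma cin_smult_right [simp]: "cin x (c *s y) = cnj c * cin x y"
  by (simp add: cin_def sum_distrib_left algebra_simps)

lemma cin_commute: "cin y x = cnj (cin x y)"
  by (simp add: cin_def cnj_sum mult.commute)

lemma cin_self: "cin x x = complex_of_real (inner x x)"
proof -
  have e: "x $ k * cnj (x $ k) = complex_of_real (Re (x $ k) * Re (x $ k) + Im (x $ k) * Im (x $ k))" for k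
    by (simp add: complex_eq_iff)
  show ?thesis
    by (simp only: cin_def e inner_vec_def inner_complex_def of_real_sum)
qed

lemma axis_ii: "axis i (c::complex) = c *s axis i 1"
  by (simp add: vec_eq_iff axis_def)

lemma levi_formula:
  fixes F :: "complex^'n \<Rightarrow> complex^'m" and z :: "complex^'n"
  assumes hF: "holo_on F UNIV" and nz: "\<And>w. w \<noteq> 0 \<Longrightarrow> F w \<noteq> 0" and z: "z \<noteq> 0"
  shows "levi (\<lambda>w. ln (norm (F w))) z $ i $ j =
    (1/2) * (cin (Dh F z (axis i 1)) (Dh F z (axis j 1)) / of_real (inner (F z) (F z))
     - cin (Dh F z (axis i 1)) (F z) * cnj (cin (Dh F z (axis j 1)) (F z)) / (of_real (inner (F z) (F z)))^2)"
proof -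
  define H where "H = (\<chi> k. deriv (\<lambda>\<sigma>. Dh F (z + \<sigma> *s axis i 1) (axis j 1) $ k) 0)"
  define N where "N = inner (F z) (F z)"
  define C where "C = cin (Dh F z (axis i 1)) (Dh F z (axis j 1))"
  define Ai where "Ai = cin (Dh F z (axis i 1)) (F z)"
  define Aj where "Aj = cin (Dh F z (axis j 1)) (F z)"
  define P where "P = cin (F z) H"
  have N0: "N > 0" using nz[OF z] by (simp add: N_def)
  have sd: "dirderiv (c1 *s axis i 1) (dirderiv (c2 *s axis j 1) (\<lambda>w. ln (norm (F w)))) z =
    (Re (c1 * cnj c2 * C) + Re (cnj (c1 * c2) * P)) / N
     - Re (cnj c2 * cnj Aj) * (2 * Re (cnj c1 * cnj Ai)) / N^2" for c1 c2
  proof -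
    have e1: "inner (Dh F z (c1 *s axis i 1)) (Dh F z (c2 *s axis j 1)) = Re (c1 * cnj c2 * C)"
      by (simp only: Dh(2)[OF hF] inner_cin cin_smult_left cin_smult_right C_def mult.assoc mult.left_commute[of "cnj c2"])
    have e2: "inner (F z) ((c1 * c2) *s H) = Re (cnj (c1 * c2) * P)"
      by (simp only: inner_cin cin_smult_right P_def)
    have e3: "inner (F z) (Dh F z (c2 *s axis j 1)) = Re (cnj c2 * cnj Aj)"
      by (simp only: Dh(2)[OF hF] inner_cin cin_smult_right Aj_def cin_commute[of "F z"])
    have e4: "inner (F z) (Dh F z (c1 *s axis i 1)) = Re (cnj c1 * cnj Ai)"
      by (simp only: Dh(2)[OF hF] inner_cin cin_smult_right Ai_def cin_commute[of "F z"])
    show ?thesis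
      using second_dir[OF hF nz z, of c1 i c2 j] unfolding e1 e2 e3 e4 H_def[symmetric] N_def[symmetric] .
  qed
  note s11 = sd[of 1 1, simplified vector_smult_lid] and s1i = sd[of 1 \<i>, simplified vector_smult_lid]
    and si1 = sd[of \<i> 1, simplified vector_smult_lid] and sii = sd[of \<i> \<i>]
  have L: "levi (\<lambda>w. ln (norm (F w))) z $ i $ j = (1/4) * (complex_of_real
      (dirderiv (axis i 1) (dirderiv (axis j 1) (\<lambda>w. ln (norm (F w)))) z +
       dirderiv (\<i> *s axis i 1) (dirderiv (\<i> *s axis j 1) (\<lambda>w. ln (norm (F w)))) z) +
     \<i> * complex_of_real
      (dirderiv (axis i 1) (dirderiv (\<i> *s axis j 1) (\<lambda>w. ln (norm (F w)))) z -
       dirderiv (\<i> *s axis i 1) (dirderiv (axis j 1) (\<lambda>w. ln (norm (F w)))) z))"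
    unfolding levi_def Let_def by (simp only: vec_lambda_beta axis_ii[of _ \<i>])
  have alg: "(1/4) * (complex_of_real
      (((Re (1 * cnj 1 * C) + Re (cnj (1 * 1) * P)) / N - Re (cnj 1 * cnj Aj) * (2 * Re (cnj 1 * cnj Ai)) / N^2) + ((Re (\<i> * cnj \<i> * C) + Re (cnj (\<i> * \<i>) * P)) / N - Re (cnj \<i> * cnj Aj) * (2 * Re (cnj \<i> * cnj Ai)) / N^2)) + \<i> * complex_of_real (((Re (1 * cnj \<i> * C) + Re (cnj (1 * \<i>) * P)) / N - Re (cnj \<i> * cnj Aj) * (2 * Re (cnj 1 * cnj Ai)) / N^2) - ((Re (\<i> * cnj 1 * C) + Re (cnj (\<i> * 1) * P)) / N - Re (cnj 1 * cnj Aj) * (2 * Re (cnj \<i> * cnj Ai)) / N^2)))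
    = (1/2) * (C / of_real N - Ai * cnj Aj / (of_real N)^2)"
    using N0 by (simp add: complex_eq_iff field_simps power2_eq_square)
  show ?thesis
    unfolding L s11 s1i si1 sii C_def[symmetric] Ai_def[symmetric] Aj_def[symmetric] N_def[symmetric]
    by (rule alg)
qed

lemma cin_sum_right: "cin x (\<Sum>j\<in>S. f j) = (\<Sum>j\<in>S. cin x (f j))"
  by (simp add: cin_def sum_component cnj_sum sum_distrib_left sum.swap[of _ S])

lemma cin_sum_left: "cin (\<Sum>j\<in>S. f j) y = (\<Sum>j\<in>S. cin (f j) y)"
  by (simp add: cin_def sum_component sum_distrib_right sum.swap[of _ S])

lemma cin_diff_right: "cin x (y - w) = cin x y - cin x w"
  by (simp add: cin_def algebra_simps sum_subtractf)

lemma cin_zero_iff: "cin x x = 0 \<longleftrightarrow> x = 0"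
  by (simp add: cin_self)

lemma kernel_sum:
  fixes M :: "complex^'n^'n" and h :: "'n \<Rightarrow> complex^'m" and a :: "complex^'m" and A :: "complex^'n \<Rightarrow> complex^'m"
  assumes M: "\<And>i j. M $ i $ j = (1/2) * (cin (h i) (h j) / of_real N - cin (h i) a * cnj (cin (h j) a) / (of_real N)^2)"
    and A: "A x = (\<Sum>j\<in>UNIV. (x $ j) *s h j)"
    and N: "N > 0"
  shows "(\<Sum>j\<in>UNIV. M $ i $ j * cnj (x $ j)) = (1 / (2 * of_real N)) * cin (h i) (A x - (cin (A x) a / of_real N) *s a)"
proof -
  have s1: "(\<Sum>j\<in>UNIV. cin (h i) (h j) * cnj (x $ j)) = cin (h i) (A x)"
    by (simp add: A cin_sum_right mult.commute)
  have s2: "(\<Sum>j\<in>UNIV. cnj (cin (h j) a) * cnj (x $ j)) = cnj (cin (A x) a)"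
    by (simp add: A cin_sum_left cnj_sum mult.commute)
  have "(\<Sum>j\<in>UNIV. M $ i $ j * cnj (x $ j)) =
      (1/2) * ((\<Sum>j\<in>UNIV. cin (h i) (h j) * cnj (x $ j)) / of_real N
       - cin (h i) a * (\<Sum>j\<in>UNIV. cnj (cin (h j) a) * cnj (x $ j)) / (of_real N)^2)"
    by (simp add: M sum_distrib_left sum_distrib_right sum_divide_distrib algebra_simps sum_subtractf)
  also have "\<dots> = (1/2) * (cin (h i) (A x) / of_real N - cin (h i) a * cnj (cin (A x) a) / (of_real N)^2)"
    by (simp only: s1 s2)
  also have "\<dots> = (1 / (2 * of_real N)) * cin (h i) (A x - (cin (A x) a / of_real N) *s a)"
    using N by (simp add: cin_diff_right field_simps power2_eq_square)
  finally show ?thesis .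
qed

lemma kernel_zero:
  fixes M :: "complex^'n^'n" and h :: "'n \<Rightarrow> complex^'m" and a :: "complex^'m" and A :: "complex^'n \<Rightarrow> complex^'m"
  assumes M: "\<And>i j. M $ i $ j = (1/2) * (cin (h i) (h j) / of_real N - cin (h i) a * cnj (cin (h j) a) / (of_real N)^2)"
    and A: "A x = (\<Sum>j\<in>UNIV. (x $ j) *s h j)"
    and N: "N = inner a a" "N > 0"
    and Ax: "A x = a"
  shows "(\<Sum>j\<in>UNIV. M $ i $ j * cnj (x $ j)) = 0"
proof -
  have "cin a a / of_real N = 1" using N by (simp add: cin_self)
  then show ?thesis
    using kernel_sum[where i=i and M=M and h=h and a=a and N=N and A=A, OF M A N(2)] by (simp add: Ax cin_def)
qed

lemma kernel_par:
  fixes M :: "complex^'n^'n" and h :: "'n \<Rightarrow> complex^'m" and a :: "complex^'m" and A :: "complex^'n \<Rightarrow> complex^'m"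
  assumes M: "\<And>i j. M $ i $ j = (1/2) * (cin (h i) (h j) / of_real N - cin (h i) a * cnj (cin (h j) a) / (of_real N)^2)"
    and A: "\<And>y. A y = (\<Sum>j\<in>UNIV. (y $ j) *s h j)"
    and sur: "surj A"
    and N: "N > 0"
    and K: "\<And>i. (\<Sum>j\<in>UNIV. M $ i $ j * cnj (x $ j)) = 0"
  shows "A x = (cin (A x) a / of_real N) *s a"
proof -
  define p where "p = A x - (cin (A x) a / of_real N) *s a"
  have hp: "cin (h i) p = 0" for i
    using kernel_sum[where i=i and x=x and M=M and h=h and a=a and N=N and A=A, OF M A[of x] N] K[of i] N by (simp add: p_def)
  obtain y where y: "A y = p" using sur by (metis surj_def)
  have "cin p p = (\<Sum>j\<in>UNIV. (y $ j) * cin (h j) p)"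
    by (simp add: y[symmetric] A[of y] cin_sum_left)
  also have "\<dots> = 0" by (simp add: hp)
  finally have "p = 0" by (simp add: cin_zero_iff)
  then show ?thesis by (simp add: p_def)
qed


lemma wronski_line:
  fixes f g f' g' :: "complex \<Rightarrow> complex"
  assumes df: "\<And>t. (f has_field_derivative f' t) (at t)"
    and dg: "\<And>t. (g has_field_derivative g' t) (at t)"
    and f0: "f 0 = 0" and g0: "g 0 = 0" and b: "g' 0 \<noteq> 0"
    and W: "\<And>t. f t * g' t - g t * f' t = 0"
  shows "g' 0 * f t = f' 0 * g t"
proof -
  define a where "a = f' 0"
  define b where "b = g' 0"
  have gl: "((\<lambda>t. g t / t) \<longlongrightarrow> b) (at 0)"
    using dg[of 0] unfolding has_field_derivative_iff by (simp add: g0 b_def)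
  have "eventually (\<lambda>t. g t / t \<noteq> 0) (at 0)"
    by (rule tendsto_imp_eventually_ne[OF gl]) (use b in \<open>simp add: b_def\<close>)
  then obtain r where r: "r > 0" and rg: "\<And>t. t \<noteq> 0 \<Longrightarrow> dist t 0 < r \<Longrightarrow> g t / t \<noteq> 0"
    unfolding eventually_at by auto
  define S where "S = ball (0::complex) r \<inter> {t. Re t > 0}"
  have S_open: "open S" unfolding S_def by (intro open_Int open_halfspace_Re_gt) auto
  have S_conv: "convex S" unfolding S_def by (intro convex_Int convex_halfspace_Re_gt) auto
  have gS: "g t \<noteq> 0" if "t \<in> S" for t
  proof -
    have "t \<noteq> 0" using that by (auto simp: S_def)
    then show ?thesis using rg[of t] that by (auto simp: S_def dist_norm)
  qed
  have "\<exists>c. \<forall>x\<in>S. f x / g x = c"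
  proof (rule has_field_derivative_zero_constant[OF S_conv])
    fix x assume x: "x \<in> S"
    have "((\<lambda>x. f x / g x) has_field_derivative (f' x * g x - f x * g' x) / (g x * g x)) (at x)"
      by (rule DERIV_divide[OF df dg gS[OF x]])
    moreover have "f' x * g x - f x * g' x = 0" using W[of x] by (simp add: algebra_simps)
    ultimately show "((\<lambda>x. f x / g x) has_field_derivative 0) (at x within S)"
      by (auto intro: has_field_derivative_at_within)
  qed
  then obtain c where c: "\<And>x. x \<in> S \<Longrightarrow> f x / g x = c" by blast
  have lp: "0 islimpt S"
    unfolding islimpt_approachable
  proof (intro allI impI)
    fix e :: real assume e: "e > 0"
    define x where "x = complex_of_real (min e r / 2)"
    have m: "0 < min e r / 2" "min e r / 2 < e" "min e r / 2 < r" using e r by auto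
    have "x \<in> S" "x \<noteq> 0" "dist x 0 < e" using m by (simp_all add: x_def S_def dist_norm)
    then show "\<exists>x'\<in>S. x' \<noteq> 0 \<and> dist x' 0 < e" by blast
  qed
  have fl: "((\<lambda>t. f t / t) \<longlongrightarrow> a) (at 0)"
    using df[of 0] unfolding has_field_derivative_iff by (simp add: f0 a_def)
  have fl': "((\<lambda>t. f t / t) \<longlongrightarrow> a) (at 0 within S)"
    by (rule tendsto_within_subset[OF fl]) simp
  have gl': "((\<lambda>t. g t / t) \<longlongrightarrow> b) (at 0 within S)"
    by (rule tendsto_within_subset[OF gl]) simp
  have lim: "((\<lambda>t. (f t / t) / (g t / t)) \<longlongrightarrow> a / b) (at 0 within S)"
    by (rule tendsto_divide[OF fl' gl']) (use b in \<open>simp add: b_def\<close>)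
  have ev: "eventually (\<lambda>t. (f t / t) / (g t / t) = c) (at 0 within S)"
    unfolding eventually_at_filter
    by (intro always_eventually allI impI) (use c in auto)
  have "((\<lambda>t. c) \<longlongrightarrow> a / b) (at 0 within S)"
    by (rule Lim_transform_eventually[OF lim ev])
  moreover have "\<not> trivial_limit (at 0 within S)"
    using lp by (simp add: trivial_limit_within)
  ultimately have ca: "c = a / b"
    using tendsto_const tendsto_unique by blast
  define \<delta> where "\<delta> = (\<lambda>t. b * f t - a * g t)"
  have hol: "\<delta> holomorphic_on UNIV"
  proof -
    have "(\<delta> has_field_derivative (b * f' x - a * g' x)) (at x)" for x
      unfolding \<delta>_def by (rule DERIV_diff[OF DERIV_cmult[OF df] DERIV_cmult[OF dg]])
    then show ?thesis unfolding holomorphic_on_def field_differentiable_def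
      by (blast intro: has_field_derivative_at_within)
  qed
  have "\<delta> t = 0"
  proof (rule analytic_continuation[OF hol open_UNIV connected_UNIV _ _ lp])
    fix x assume "x \<in> S"
    then show "\<delta> x = 0"
    proof -
      have "f x = c * g x" using c[OF \<open>x \<in> S\<close>] gS[OF \<open>x \<in> S\<close>] by (simp add: field_simps)
      then show ?thesis using b by (simp add: \<delta>_def ca b_def[symmetric])
    qed
  qed auto
  then show ?thesis by (simp add: \<delta>_def a_def b_def)
qed


lemma aut_facts:
  assumes "F \<in> Aut0_hol"
  shows "holo_on F UNIV" "holo_on (inv F) UNIV" "bij F" "F 0 = 0" "(F has_derivative id) (at 0)"
  using assms unfolding Aut0_hol_def biholomorphic_def by auto

lemma comp_holo:
  fixes F :: "complex^'m \<Rightarrow> complex^'k" and H :: "complex^'n \<Rightarrow> complex^'m"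
  assumes hF: "holo_on F UNIV" and hH: "holo_on H UNIV"
  shows "holo_on (\<lambda>y. F (H y)) UNIV" "Dh (\<lambda>y. F (H y)) y = (\<lambda>p. Dh F (H y) (Dh H y p))"
proof -
  have d: "((\<lambda>y. F (H y)) has_derivative (\<lambda>p. Dh F (H y) (Dh H y p))) (at y)" for y
    using has_derivative_compose[OF Dh(1)[OF hH] Dh(1)[OF hF]] by (simp add: o_def)
  show h: "holo_on (\<lambda>y. F (H y)) UNIV"
    unfolding holo_on_def
  proof (intro conjI open_UNIV ballI)
    fix z
    show "\<exists>L. ((\<lambda>y. F (H y)) has_derivative L) (at z) \<and> (\<forall>c v. L (c *s v) = c *s L v)"
      by (rule exI[of _ "\<lambda>p. Dh F (H z) (Dh H z p)"]) (simp add: d Dh(2)[OF hH] Dh(2)[OF hF])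
  qed
  show "Dh (\<lambda>y. F (H y)) y = (\<lambda>p. Dh F (H y) (Dh H y p))"
    by (rule Dh_unique[OF h d])
qed

lemma inv_chain:
  fixes F :: "complex^'n \<Rightarrow> complex^'n"
  assumes hF: "holo_on F UNIV" and hFi: "holo_on (inv F) UNIV" and b: "bij F"
  shows "Dh F (inv F y) (Dh (inv F) y p) = p"
proof -
  have "((\<lambda>y. F (inv F y)) has_derivative Dh (\<lambda>y. F (inv F y)) y) (at y)"
    by (rule Dh(1)[OF comp_holo(1)[OF hF hFi]])
  moreover have "(\<lambda>y. F (inv F y)) = (\<lambda>y. y)"
    using b by (auto simp: bij_def surj_f_inv_f)
  ultimately have "((\<lambda>y. y) has_derivative Dh (\<lambda>y. F (inv F y)) y) (at y)" by simp
  then have "Dh (\<lambda>y. F (inv F y)) y = (\<lambda>y. y)"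
    using has_derivative_unique[OF _ has_derivative_ident] by blast
  then show ?thesis using comp_holo(2)[OF hF hFi, of y] by metis
qed

lemma levi_M:
  fixes F :: "complex^'n \<Rightarrow> complex^'n"
  assumes hF: "holo_on F UNIV" and b: "bij F" and F0: "F 0 = 0" and z: "z \<noteq> 0"
  shows "\<And>i j. levi (\<lambda>w. ln (norm (F w))) z $ i $ j = (1/2) * (cin (Dh F z (axis i 1)) (Dh F z (axis j 1)) / of_real (inner (F z) (F z))
     - cin (Dh F z (axis i 1)) (F z) * cnj (cin (Dh F z (axis j 1)) (F z)) / (of_real (inner (F z) (F z)))^2)"
    and "F z \<noteq> 0"
proof -
  have nz: "F w \<noteq> 0" if "w \<noteq> 0" for w
    using that b F0 by (metis bij_def injD)
  show "F z \<noteq> 0" using nz[OF z] .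
  show "levi (\<lambda>w. ln (norm (F w))) z $ i $ j = (1/2) * (cin (Dh F z (axis i 1)) (Dh F z (axis j 1)) / of_real (inner (F z) (F z))
     - cin (Dh F z (axis i 1)) (F z) * cnj (cin (Dh F z (axis j 1)) (F z)) / (of_real (inner (F z) (F z)))^2)" for i j
    by (rule levi_formula[OF hF nz z])
qed

lemma main_line:
  fixes F G :: "complex^'n \<Rightarrow> complex^'n"
  assumes F: "F \<in> Aut0_hol" and G: "G \<in> Aut0_hol" and X: "X0 F = X0 G" and w: "w \<noteq> 0"
  shows "F (inv G w) = w"
proof -
  note hF = aut_facts(1)[OF F] and hFi = aut_facts(2)[OF F] and bF = aut_facts(3)[OF F]
    and F0 = aut_facts(4)[OF F] and dF0 = aut_facts(5)[OF F]
  note hG = aut_facts(1)[OF G] and hGi = aut_facts(2)[OF G] and bG = aut_facts(3)[OF G]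
    and G0 = aut_facts(4)[OF G] and dG0 = aut_facts(5)[OF G]
  define K where "K = (\<lambda>y. F (inv G y))"
  have hK: "holo_on K UNIV" unfolding K_def by (rule comp_holo(1)[OF hF hGi])
  have DK: "Dh K y = (\<lambda>p. Dh F (inv G y) (Dh (inv G) y p))" for y
    unfolding K_def by (rule comp_holo(2)[OF hF hGi])
  define \<Gamma> where "\<Gamma> = (\<lambda>t::complex. K (t *s w))"
  define V where "V = (\<lambda>t::complex. Dh K (t *s w) w)"
  have d\<Gamma>: "((\<lambda>t. \<Gamma> t $ k) has_field_derivative V t $ k) (at t)" for k t
    using line_field_deriv[OF hK, of 0 w k t] by (simp add: \<Gamma>_def V_def)
  have Gi0: "inv G 0 = 0" using bG G0 by (metis bij_def inv_f_f)
  have DF0: "Dh F 0 = id" by (rule Dh_unique[OF hF dF0])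
  have DG0: "Dh G 0 = id" by (rule Dh_unique[OF hG dG0])
  have DGi0: "Dh (inv G) 0 p = p" for p using inv_chain[OF hG hGi bG, of 0 p] Gi0 DG0 by simp
  have V0: "V 0 = w" by (simp add: V_def DK Gi0 DF0 DGi0)
  have \<Gamma>0: "\<Gamma> 0 = 0" by (simp add: \<Gamma>_def K_def Gi0 F0)
  have par: "\<exists>c. t *s V t = c *s \<Gamma> t" if t: "t \<noteq> 0" for t
  proof -
    define y where "y = t *s w"
    define z where "z = inv G y"
    have Gz: "G z = y" using bG by (simp add: z_def bij_def surj_f_inv_f)
    have y0: "y \<noteq> 0" using t w by (simp add: y_def)
    have z0: "z \<noteq> 0" using Gz G0 y0 by auto
    define x where "x = Dh (inv G) y y"
    have Gx: "Dh G z x = G z" using inv_chain[OF hG hGi bG, of y y] Gz by (simp add: x_def z_def)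
    note MG = levi_M(1)[OF hG bG G0 z0] and GZ = levi_M(2)[OF hG bG G0 z0]
    note MF = levi_M(1)[OF hF bF F0 z0] and FZ = levi_M(2)[OF hF bF F0 z0]
    have XX: "levi (\<lambda>w. ln (norm (F w))) z = levi (\<lambda>w. ln (norm (G w))) z"
      using fun_cong[OF X, of z] z0 by (simp add: X0_def)
    have kz: "(\<Sum>j\<in>UNIV. levi (\<lambda>w. ln (norm (G w))) z $ i $ j * cnj (x $ j)) = 0" for i
      by (rule kernel_zero[where M = "levi (\<lambda>w. ln (norm (G w))) z" and h = "\<lambda>i. Dh G z (axis i 1)"
            and a = "G z" and N = "inner (G z) (G z)" and A = "Dh G z", OF MG Dh_expand[OF hG] refl _ Gx])
         (use GZ in simp)
    have sur: "surj (Dh F z)"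
    proof -
      have "Dh F z (Dh (inv F) (F z) p) = p" for p
        using inv_chain[OF hF hFi bF, of "F z" p] bF by (simp add: bij_def inv_f_f)
      then show ?thesis by (metis surjI)
    qed
    have "Dh F z x = (cin (Dh F z x) (F z) / of_real (inner (F z) (F z))) *s F z"
      by (rule kernel_par[where M = "levi (\<lambda>w. ln (norm (F w))) z" and h = "\<lambda>i. Dh F z (axis i 1)"
            and a = "F z" and N = "inner (F z) (F z)" and A = "Dh F z", OF MF Dh_expand[OF hF] sur])
         (use FZ kz XX in simp_all)
    moreover have "Dh F z x = t *s V t"
      by (simp add: x_def y_def V_def DK z_def Dh(2)[OF hGi] Dh(2)[OF hF])
    moreover have "F z = \<Gamma> t" by (simp add: \<Gamma>_def K_def z_def y_def)
    ultimately show ?thesis by metis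
  qed
  have W: "\<Gamma> t $ i * V t $ j - \<Gamma> t $ j * V t $ i = 0" for t i j
  proof (cases "t = 0")
    case True then show ?thesis by (simp add: \<Gamma>0)
  next
    case False
    obtain c where c: "t *s V t = c *s \<Gamma> t" using par[OF False] by blast
    have ci: "t * V t $ i = c * \<Gamma> t $ i" and cj: "t * V t $ j = c * \<Gamma> t $ j"
      using c[THEN arg_cong[where f="\<lambda>v. v $ i"]] c[THEN arg_cong[where f="\<lambda>v. v $ j"]] by simp_all
    have "t * (\<Gamma> t $ i * V t $ j - \<Gamma> t $ j * V t $ i) = \<Gamma> t $ i * (t * V t $ j) - \<Gamma> t $ j * (t * V t $ i)"
      by (simp add: algebra_simps)
    also have "\<dots> = 0" by (simp add: ci cj)
    finally show ?thesis using False by simp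
  qed
  obtain j0 where j0: "w $ j0 \<noteq> 0" using w by (auto simp: vec_eq_iff)
  have lin: "w $ j0 * \<Gamma> t $ i = w $ i * \<Gamma> t $ j0" for t i
    using wronski_line[of "\<lambda>t. \<Gamma> t $ i" "\<lambda>t. V t $ i" "\<lambda>t. \<Gamma> t $ j0" "\<lambda>t. V t $ j0", OF d\<Gamma> d\<Gamma>] \<Gamma>0 V0 j0 W
    by simp
  define \<phi> where "\<phi> = (\<lambda>t. \<Gamma> t $ j0 / w $ j0)"
  have \<Gamma>\<phi>: "\<Gamma> t = \<phi> t *s w" for t
    unfolding vec_eq_iff
  proof
    fix i show "\<Gamma> t $ i = (\<phi> t *s w) $ i"
      using lin[of t i] j0 by (simp add: \<phi>_def field_simps)
  qed
  have d\<phi>: "(\<phi> has_field_derivative V t $ j0 / w $ j0) (at t)" for t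
    unfolding \<phi>_def by (rule DERIV_cdivide[OF d\<Gamma>])
  have h\<phi>: "\<phi> holomorphic_on UNIV"
    unfolding holomorphic_on_def field_differentiable_def using d\<phi> by (blast intro: has_field_derivative_at_within)
  have d\<phi>0: "(\<phi> has_field_derivative 1) (at 0)" using d\<phi>[of 0] V0 j0 by simp
  have \<phi>0: "\<phi> 0 = 0" by (simp add: \<phi>_def \<Gamma>0)
  have injGi: "inj (inv G)" using bG bij_imp_bij_inv bij_def by blast
  have injF: "inj F" using bF bij_def by blast
  have inj\<phi>: "inj \<phi>"
  proof (rule injI)
    fix s t assume "\<phi> s = \<phi> t"
    then have "\<Gamma> s = \<Gamma> t" by (simp add: \<Gamma>\<phi>)
    then have "s *s w = t *s w" unfolding \<Gamma>_def K_def using injF injGi by (auto dest: injD)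
    then show "s = t" using w by simp
  qed
  have "\<phi> 1 = 1" using inj_entire_id[OF h\<phi> inj\<phi> \<phi>0 d\<phi>0] .
  then have "\<Gamma> 1 = w" by (simp add: \<Gamma>\<phi>)
  then show ?thesis by (simp add: \<Gamma>_def K_def)
qed

theorem theorem3:
  shows "inj_on (X0 :: (complex ^ 'n \<Rightarrow> complex ^ 'n) \<Rightarrow> _) Aut0_hol"
proof (rule inj_onI)
  fix F G :: "complex ^ 'n \<Rightarrow> complex ^ 'n"
  assume F: "F \<in> Aut0_hol" and G: "G \<in> Aut0_hol" and X: "X0 F = X0 G"
  show "F = G"
  proof
    fix z
    show "F z = G z"
    proof (cases "G z = 0")
      case True
      then have "z = 0" using aut_facts(3,4)[OF G] by (metis bij_def injD)
      then show ?thesis using aut_facts(4)[OF F] aut_facts(4)[OF G] by simp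
    next
      case False
      have "inv G (G z) = z" using aut_facts(3)[OF G] by (simp add: bij_def inv_f_f)
      then show ?thesis using main_line[OF F G X False] by simp
    qed
  qed
qed


end
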